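(* Assume $\lambda_2>\mu$ and $M>\lambda_2-\mu$ (so $\widetilde\lambda>0$), and let $\widehat C>0$. Then for all sufficiently small $\varepsilon>0$ the following holds. Suppose $(n_{1a},n_{1d},n_2)\in(0,\infty)^3$ satisfies - $n_2\in(\bar n_2-2\sqrt\varepsilon,\bar n_2+2\sqrt\varepsilon)$, - $n_{1a}+n_{1d}\in(\varepsilon/\widehat C,\sqrt\varepsilon)$, - $n_{1d}/n_{1a}=\pi_{1d}/\pi_{1a}$. Then $$\frac{pC(n_{1a}+n_2)}{\kappa\mu+\sigma}>\frac{n_{1d}}{n_{1a}}>\frac{\mu-\lambda_1+C(n_2+n_{1a})+\tau n_2}{\sigma}.$$
   Context: Let $\lambda_1,\lambda_2,\mu,C,\sigma,\tau>0$, $p\in(0,1)$ and $\kappa\ge 0$. Set $$M:=\frac{Cp\sigma}{\tau(\kappa\mu+\sigma)}(\lambda_2-\mu)+\frac{C}{\tau}(\lambda_1-\lambda_2),\qquad \bar n_2:=\max(\lambda_2-\mu,0)/C.$$ Let $$J:=\begin{pmatrix}\lambda_1-\lambda_2-\frac{\tau}{C}(\lambda_2-\mu) & p(\lambda_2-\mu)\\ \sigma & -\kappa\mu-\sigma\end{pmatrix}.$$ Let $\widetilde\lambda$ be the eigenvalue of $J$ with the largest real part. When $\lambda_2>\mu$, $\widetilde\lambda$ is real (its Perron root). Let $(\pi_{1a},\pi_{1d})$ be the left eigenvector of $J$ for $\widetilde\lambda$ with positive entries and $\pi_{1a}+\pi_{1d}=1$. *)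

theory Defs
  imports Complex_Main
begin

definition J11 :: "real \<Rightarrow> real \<Rightarrow> real \<Rightarrow> real \<Rightarrow> real \<Rightarrow> real" where
  "J11 l1 l2 mu C tau = l1 - l2 - (tau / C) * (l2 - mu)"
definition J12 :: "real \<Rightarrow> real \<Rightarrow> real \<Rightarrow> real" where
  "J12 p l2 mu = p * (l2 - mu)"
definition J21 :: "real \<Rightarrow> real" where
  "J21 sigma = sigma"
definition J22 :: "real \<Rightarrow> real \<Rightarrow> real \<Rightarrow> real" where
  "J22 kappa mu sigma = - kappa * mu - sigma"

definition is_eigenvalue2 :: "real \<Rightarrow> real \<Rightarrow> real \<Rightarrow> real \<Rightarrow> complex \<Rightarrow> bool" where
  "is_eigenvalue2 a b c d z \<longleftrightarrow> (z - of_real a) * (z - of_real d) - of_real b * of_real c = 0"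

definition is_top_eigenvalue2 :: "real \<Rightarrow> real \<Rightarrow> real \<Rightarrow> real \<Rightarrow> real \<Rightarrow> bool" where
  "is_top_eigenvalue2 a b c d lam \<longleftrightarrow>
     is_eigenvalue2 a b c d (of_real lam) \<and> (\<forall>z. is_eigenvalue2 a b c d z \<longrightarrow> Re z \<le> lam)"

definition is_left_eigvec2 :: "real \<Rightarrow> real \<Rightarrow> real \<Rightarrow> real \<Rightarrow> real \<Rightarrow> real \<Rightarrow> real \<Rightarrow> bool" where
  "is_left_eigvec2 a b c d lam x y \<longleftrightarrow> x * a + y * c = lam * x \<and> x * b + y * d = lam * y"

end

theory Submission
  imports Defs
begin

lemma eig_real: "is_eigenvalue2 a b c d (of_real x) \<longleftrightarrow> (x - a) * (x - d) - b * c = 0"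
proof -
  have "(of_real x - of_real a) * (of_real x - of_real d) - of_real b * of_real c
        = (of_real ((x - a) * (x - d) - b * c) :: complex)" by simp
  then show ?thesis unfolding is_eigenvalue2_def by (simp only: of_real_eq_0_iff)
qed

lemma top_pos:
  assumes "is_top_eigenvalue2 a b c d lam" "a * d - b * c < 0"
  shows "lam > 0"
proof (rule ccontr)
  assume "\<not> lam > 0"
  have e: "(lam - a) * (lam - d) - b * c = 0" using assms(1) eig_real unfolding is_top_eigenvalue2_def by blast
  define m where "m = a + d - lam"
  have "(m - a) * (m - d) - b * c = 0" using e unfolding m_def by (simp add: algebra_simps)
  then have "Re (of_real m) \<le> lam" using assms(1) eig_real unfolding is_top_eigenvalue2_def by blast
  then have "m \<le> lam" by simp
  have "lam * m = a * d - b * c" using e unfolding m_def by (simp add: algebra_simps)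
  with assms(2) have "lam * m < 0" by simp
  with \<open>m \<le> lam\<close> \<open>\<not> lam > 0\<close> show False
    by (smt (verit) mult_nonpos_nonpos)
qed

lemma top_unique:
  assumes "is_top_eigenvalue2 a b c d l1" "is_top_eigenvalue2 a b c d l2"
  shows "l1 = l2"
proof -
  have "l1 \<le> l2" using assms unfolding is_top_eigenvalue2_def
    by (metis Re_complex_of_real)
  moreover have "l2 \<le> l1" using assms unfolding is_top_eigenvalue2_def
    by (metis Re_complex_of_real)
  ultimately show ?thesis by simp
qed

theorem lemmaD4:
  fixes l1 l2 mu C sigma tau p kappa Chat :: real
  assumes "l1 > 0" "l2 > 0" "mu > 0" "C > 0" "sigma > 0" "tau > 0"
    and "0 < p" "p < 1" "kappa \<ge> 0"
    and "l2 > mu"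
    and "(C * p * sigma) / (tau * (kappa * mu + sigma)) * (l2 - mu) + (C / tau) * (l1 - l2) > l2 - mu"
    and "Chat > 0"
  shows "\<exists>eps0 > 0. \<forall>eps. 0 < eps \<and> eps < eps0 \<longrightarrow>
    (\<forall>lam pa pd n1a n1d n2.
       is_top_eigenvalue2 (J11 l1 l2 mu C tau) (J12 p l2 mu) (J21 sigma) (J22 kappa mu sigma) lam \<and>
       is_left_eigvec2 (J11 l1 l2 mu C tau) (J12 p l2 mu) (J21 sigma) (J22 kappa mu sigma) lam pa pd \<and>
       pa > 0 \<and> pd > 0 \<and> pa + pd = 1 \<and>
       n1a > 0 \<and> n1d > 0 \<and> n2 > 0 \<and>
       max (l2 - mu) 0 / C - 2 * sqrt eps < n2 \<and> n2 < max (l2 - mu) 0 / C + 2 * sqrt eps \<and>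
       eps / Chat < n1a + n1d \<and> n1a + n1d < sqrt eps \<and>
       n1d / n1a = pd / pa
     \<longrightarrow>
       p * C * (n1a + n2) / (kappa * mu + sigma) > n1d / n1a \<and>
       n1d / n1a > (mu - l1 + C * (n2 + n1a) + tau * n2) / sigma)"
proof -
  define a where "a = J11 l1 l2 mu C tau"
  define b where "b = J12 p l2 mu"
  define K where "K = kappa * mu + sigma"
  have a_eq: "a = l1 - l2 - (tau / C) * (l2 - mu)" unfolding a_def J11_def by simp
  have b_eq: "b = p * (l2 - mu)" unfolding b_def J12_def by simp
  have Jd: "J22 kappa mu sigma = - K" unfolding J22_def K_def by simp
  have Jc: "J21 sigma = sigma" unfolding J21_def by simp
  have Kpos: "K > 0" unfolding K_def using assms by (smt (verit) mult_nonneg_nonneg)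
  have bpos: "b > 0" unfolding b_eq using assms by simp
  have "tau / C * ((C * p * sigma) / (tau * K) * (l2 - mu) + (C / tau) * (l1 - l2)) > tau / C * (l2 - mu)"
    using assms(11) assms(4,6) unfolding K_def by (intro mult_strict_left_mono) auto
  also have "tau / C * ((C * p * sigma) / (tau * K) * (l2 - mu) + (C / tau) * (l1 - l2))
     = b * sigma / K + (l1 - l2)" unfolding b_eq using assms(4,6) Kpos by (simp add: field_simps)
  finally have key: "a + b * sigma / K > 0" unfolding a_eq by simp
  have f0: "a * (- K) - b * sigma < 0"
  proof -
    have "K * (a + b * sigma / K) > 0" using key Kpos by simp
    also have "K * (a + b * sigma / K) = K * a + b * sigma" using Kpos by (simp add: field_simps)
    finally have "K * a + b * sigma > 0" .
    then show ?thesis by (simp add: algebra_simps)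
  qed
  show ?thesis
  proof (cases "\<exists>lam0. is_top_eigenvalue2 a b sigma (- K) lam0")
    case False
    then show ?thesis unfolding a_def b_def Jd Jc by (intro exI[of _ 1]) auto
  next
    case True
    then obtain lam0 where top0: "is_top_eigenvalue2 a b sigma (- K) lam0" by blast
    have lpos: "lam0 > 0" using top_pos[OF top0] f0 by simp
    define g where "g = min (b * lam0 / (lam0 + K) / (2 * p * C)) (lam0 / (3 * C + 2 * tau))"
    have gpos: "g > 0" unfolding g_def using lpos Kpos bpos assms by auto
    show ?thesis
    proof (intro exI[of _ "g^2"] conjI allI impI)
      show "g^2 > 0" using gpos by simp
      fix eps lam pa pd n1a n1d n2
      assume eps: "0 < eps \<and> eps < g^2"
      assume H: "is_top_eigenvalue2 (J11 l1 l2 mu C tau) (J12 p l2 mu) (J21 sigma) (J22 kappa mu sigma) lam \<and>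
       is_left_eigvec2 (J11 l1 l2 mu C tau) (J12 p l2 mu) (J21 sigma) (J22 kappa mu sigma) lam pa pd \<and>
       pa > 0 \<and> pd > 0 \<and> pa + pd = 1 \<and>
       n1a > 0 \<and> n1d > 0 \<and> n2 > 0 \<and>
       max (l2 - mu) 0 / C - 2 * sqrt eps < n2 \<and> n2 < max (l2 - mu) 0 / C + 2 * sqrt eps \<and>
       eps / Chat < n1a + n1d \<and> n1a + n1d < sqrt eps \<and>
       n1d / n1a = pd / pa"
      define s where "s = sqrt eps"
      define n where "n = (l2 - mu) / C"
      have sg: "s < g" unfolding s_def using eps gpos
        by (metis abs_of_pos real_sqrt_abs real_sqrt_less_iff)
      have mx: "max (l2 - mu) 0 = l2 - mu" using assms by simp
      have top: "is_top_eigenvalue2 a b sigma (- K) lam" using H unfolding a_def b_def Jd Jc by simp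
      have lam: "lam = lam0" using top_unique[OF top top0] .
      have ev: "is_left_eigvec2 a b sigma (- K) lam pa pd" using H unfolding a_def b_def Jd Jc by simp
      have pa: "pa > 0" and pd: "pd > 0" and n1a: "n1a > 0" using H by auto
      have n2l: "n - 2 * s < n2" and n2u: "n2 < n + 2 * s" using H mx unfolding n_def s_def by auto
      have n1as: "n1a < s" using H unfolding s_def by auto
      define r where "r = pd / pa"
      have rr: "n1d / n1a = r" using H unfolding r_def by simp
      have e1: "pa * a + pd * sigma = lam * pa" and e2: "pa * b - pd * K = lam * pd"
        using ev unfolding is_left_eigvec2_def by auto
      have r1: "r * sigma = lam - a" unfolding r_def using e1 pa by (simp add: field_simps)
      have r2: "r * (lam + K) = b" unfolding r_def using e2 pa by (simp add: field_simps)
      have Cn: "C * n = l2 - mu" unfolding n_def using assms by simp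
      have s1: "s < b * lam / (lam + K) / (2 * p * C)" using sg lam unfolding g_def by simp
      have s2: "s < lam / (3 * C + 2 * tau)" using sg lam unfolding g_def by simp
      have s1': "2 * p * C * s < b * lam / (lam + K)" using s1 assms pos_less_divide_eq[of "2 * p * C" s "b * lam / (lam + K)"] by (simp add: mult.commute)
      have s2': "(3 * C + 2 * tau) * s < lam" using s2 assms pos_less_divide_eq[of "3 * C + 2 * tau" s lam] by (simp add: mult.commute)
      have ineq1: "p * C * (n1a + n2) / K > r"
      proof -
        have "r * K = b - b * lam / (lam + K)"
          using r2 lpos Kpos lam by (simp add: field_simps)
        also have "... < b - 2 * p * C * s" using s1' by simp
        also have "... = p * C * (n - 2 * s)" unfolding b_eq Cn[symmetric] by (simp add: algebra_simps)
        also have "... < p * C * (n1a + n2)"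
          using n1a n2l assms by (intro mult_strict_left_mono) auto
        finally have "p * C * (n1a + n2) > r * K" .
        then show ?thesis using Kpos by (simp add: field_simps)
      qed
      have ineq2: "r > (mu - l1 + C * (n2 + n1a) + tau * n2) / sigma"
      proof -
        have "mu - l1 + C * (n2 + n1a) + tau * n2 < mu - l1 + C * (n + 2 * s + s) + tau * (n + 2 * s)"
          using n2u n1as assms by (smt (verit) mult_strict_left_mono)
        also have "... = - a + (3 * C + 2 * tau) * s" unfolding a_eq using Cn assms
          by (simp add: field_simps n_def)
        also have "... < r * sigma" using s2' r1 by simp
        finally show ?thesis using assms by (simp add: field_simps)
      qed
      show "p * C * (n1a + n2) / (kappa * mu + sigma) > n1d / n1a"
        using ineq1 rr unfolding K_def by simp
      show "n1d / n1a > (mu - l1 + C * (n2 + n1a) + tau * n2) / sigma"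
        using ineq2 rr by simp
    qed
  qed
qed

end
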